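(* Let $p,s\in\mathbf R$ with $s>0$. For a positive integer $n$, an arbitrary $n\times n$ complex matrix $H$ and a positive semidefinite $n\times n$ matrix $L$, define on positive definite $n\times n$ matrices $A$ \[ \psi_{L,H}(A)=\operatorname{Tr}\bigl(L+H^*A^pH\bigr)^s . \] Then the following are equivalent: (i) for every $n$, every $n\times n$ matrix $H$ and every positive semidefinite $n\times n$ matrix $L$, the map $A\mapsto\psi_{L,H}(A)$ is convex; (ii) for every $n$ and every $n\times n$ matrix $H$, the map $A\mapsto\psi_{0,H}(A)$ is convex. The same equivalence holds with "convex" replaced by "concave".
   Context: $A^p$ is defined by functional calculus for positive definite $A$; for a positive semidefinite matrix $M$ and $s>0$, $M^s$ is defined by functional calculus with the convention $0^s=0$. *)

theory Defs
  imports Complex_Main "Jordan_Normal_Form.Schur_Decomposition"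
begin

definition mtrace :: "complex mat \<Rightarrow> complex" where
  "mtrace A = (\<Sum>i<dim_row A. A $$ (i, i))"

definition hermitian_n :: "nat \<Rightarrow> complex mat \<Rightarrow> bool" where
  "hermitian_n n A \<longleftrightarrow> A \<in> carrier_mat n n \<and> mat_adjoint A = A"

definition psd_n :: "nat \<Rightarrow> complex mat \<Rightarrow> bool" where
  "psd_n n A \<longleftrightarrow> hermitian_n n A \<and>
     (\<forall>v \<in> carrier_vec n. 0 \<le> Re (conjugate v \<bullet> (A *\<^sub>v v)))"

definition pd_n :: "nat \<Rightarrow> complex mat \<Rightarrow> bool" where
  "pd_n n A \<longleftrightarrow> hermitian_n n A \<and>
     (\<forall>v \<in> carrier_vec n. v \<noteq> 0\<^sub>v n \<longrightarrow> 0 < Re (conjugate v \<bullet> (A *\<^sub>v v)))"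

definition unitary_n :: "nat \<Rightarrow> complex mat \<Rightarrow> bool" where
  "unitary_n n U \<longleftrightarrow> U \<in> carrier_mat n n \<and> mat_adjoint U * U = 1\<^sub>m n"

definition diag_real :: "nat \<Rightarrow> (nat \<Rightarrow> real) \<Rightarrow> complex mat" where
  "diag_real n d = mat n n (\<lambda>(i, j). if i = j then complex_of_real (d i) else 0)"

text \<open>Functional calculus for a Hermitian matrix via its spectral decomposition
  A = U diag(d) U*; the result U diag(f o d) U* is independent of the decomposition.\<close>
definition matfun :: "nat \<Rightarrow> (real \<Rightarrow> real) \<Rightarrow> complex mat \<Rightarrow> complex mat" where
  "matfun n f A = (THE B. \<exists>U d. unitary_n n U \<and>
       A = U * diag_real n d * mat_adjoint U \<and>
       B = U * diag_real n (f \<circ> d) * mat_adjoint U)"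

text \<open>Real powers: x powr a, with 0 powr a = 0 (matching the convention 0^s = 0).\<close>
definition mpow :: "nat \<Rightarrow> complex mat \<Rightarrow> real \<Rightarrow> complex mat" where
  "mpow n A a = matfun n (\<lambda>x. x powr a) A"

definition psi :: "nat \<Rightarrow> real \<Rightarrow> real \<Rightarrow> complex mat \<Rightarrow> complex mat \<Rightarrow> complex mat \<Rightarrow> real" where
  "psi n p s L H A = Re (mtrace (mpow n (L + mat_adjoint H * mpow n A p * H) s))"

definition convex_on_pd :: "nat \<Rightarrow> (complex mat \<Rightarrow> real) \<Rightarrow> bool" where
  "convex_on_pd n \<phi> \<longleftrightarrow> (\<forall>A B t. pd_n n A \<longrightarrow> pd_n n B \<longrightarrow> 0 \<le> t \<longrightarrow> t \<le> 1 \<longrightarrow>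
     \<phi> (complex_of_real t \<cdot>\<^sub>m A + complex_of_real (1 - t) \<cdot>\<^sub>m B) \<le> t * \<phi> A + (1 - t) * \<phi> B)"

definition concave_on_pd :: "nat \<Rightarrow> (complex mat \<Rightarrow> real) \<Rightarrow> bool" where
  "concave_on_pd n \<phi> \<longleftrightarrow> (\<forall>A B t. pd_n n A \<longrightarrow> pd_n n B \<longrightarrow> 0 \<le> t \<longrightarrow> t \<le> 1 \<longrightarrow>
     t * \<phi> A + (1 - t) * \<phi> B \<le> \<phi> (complex_of_real t \<cdot>\<^sub>m A + complex_of_real (1 - t) \<cdot>\<^sub>m B))"

end

theory Submission
  imports Defs
begin


lemma adj_dims[simp]: "dim_row (mat_adjoint A) = dim_col A" "dim_col (mat_adjoint A) = dim_row A"
  by (auto simp: mat_adjoint_def)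

lemma adj_index[simp]: "i < dim_col A \<Longrightarrow> j < dim_row A \<Longrightarrow> mat_adjoint A $$ (i,j) = cnj (A $$ (j,i))"
  by (auto simp: mat_adjoint_def mat_of_rows_def)

lemma adj_carrier[simp]: "A \<in> carrier_mat n m \<Longrightarrow> mat_adjoint A \<in> carrier_mat m n"
  by auto



lemma sq_mult_carrier[simp]: "A \<in> carrier_mat n n \<Longrightarrow> B \<in> carrier_mat n n \<Longrightarrow> A * B \<in> carrier_mat n n"
  by auto

lemma adj_adj[simp]: "mat_adjoint (mat_adjoint (A::complex mat)) = A"
  by (rule eq_matI) auto

lemma adj_mult: fixes A B :: "complex mat" assumes "A \<in> carrier_mat n k" "B \<in> carrier_mat k m"
  shows "mat_adjoint (A * B) = mat_adjoint B * mat_adjoint A"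
proof (rule eq_matI)
  fix i j assume ij: "i < dim_row (mat_adjoint B * mat_adjoint A)" "j < dim_col (mat_adjoint B * mat_adjoint A)"
  then show "mat_adjoint (A * B) $$ (i, j) = (mat_adjoint B * mat_adjoint A) $$ (i, j)"
    using assms by (auto simp: scalar_prod_def cnj_sum mult.commute intro!: sum.cong)
qed (use assms in auto)

lemma adj_add: fixes A B :: "complex mat" assumes "A \<in> carrier_mat n m" "B \<in> carrier_mat n m"
  shows "mat_adjoint (A + B) = mat_adjoint A + mat_adjoint B"
  by (rule eq_matI) (use assms in auto)

lemma adj_smult_real: "mat_adjoint (complex_of_real t \<cdot>\<^sub>m A) = complex_of_real t \<cdot>\<^sub>m mat_adjoint A"
  by (rule eq_matI) auto

lemma adj_one[simp]: "mat_adjoint (1\<^sub>m n :: complex mat) = 1\<^sub>m n"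
  by (rule eq_matI) auto

lemma adj_zero[simp]: "mat_adjoint (0\<^sub>m n m :: complex mat) = 0\<^sub>m m n"
  by (rule eq_matI) auto

lemma diag_real_carrier[simp]: "diag_real n d \<in> carrier_mat n n"
  and diag_real_dims[simp]: "dim_row (diag_real n d) = n" "dim_col (diag_real n d) = n"
  by (auto simp: diag_real_def)

lemma diag_real_index[simp]: "i < n \<Longrightarrow> j < n \<Longrightarrow> diag_real n d $$ (i,j) = (if i = j then complex_of_real (d i) else 0)"
  by (auto simp: diag_real_def)

lemma adj_diag_real[simp]: "mat_adjoint (diag_real n d) = diag_real n d"
  by (rule eq_matI) auto

lemma mult_diag_right: fixes X :: "complex mat" assumes "X \<in> carrier_mat m n" "i < m" "j < n"
  shows "(X * diag_real n d) $$ (i,j) = X $$ (i,j) * complex_of_real (d j)"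
proof -
  have "(X * diag_real n d) $$ (i,j) = (\<Sum>l<n. X $$ (i,l) * (if l = j then complex_of_real (d j) else 0))"
    using assms by (auto simp: scalar_prod_def atLeast0LessThan intro!: sum.cong)
  also have "\<dots> = X $$ (i,j) * complex_of_real (d j)"
    using assms by (simp add: if_distrib sum.delta cong: if_cong)
  finally show ?thesis .
qed

lemma mult_diag_left: fixes X :: "complex mat" assumes "X \<in> carrier_mat n m" "i < n" "j < m"
  shows "(diag_real n d * X) $$ (i,j) = complex_of_real (d i) * X $$ (i,j)"
proof -
  have "(diag_real n d * X) $$ (i,j) = (\<Sum>l<n. (if i = l then complex_of_real (d i) else 0) * X $$ (l,j))"
    using assms by (auto simp: scalar_prod_def atLeast0LessThan intro!: sum.cong)
  also have "\<dots> = (\<Sum>l<n. if l = i then complex_of_real (d i) * X $$ (l,j) else 0)"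
    by (rule sum.cong) auto
  also have "\<dots> = complex_of_real (d i) * X $$ (i,j)"
    using assms by simp
  finally show ?thesis .
qed

lemma diag_mult_diag: "diag_real n d * diag_real n e = diag_real n (\<lambda>i. d i * e i)"
proof (rule eq_matI)
  fix i j assume "i < dim_row (diag_real n (\<lambda>i. d i * e i))" "j < dim_col (diag_real n (\<lambda>i. d i * e i))"
  then show "(diag_real n d * diag_real n e) $$ (i, j) = diag_real n (\<lambda>i. d i * e i) $$ (i, j)"
    by (subst mult_diag_left[OF diag_real_carrier]) auto
qed auto

lemma hermitian_diag_conj: "U \<in> carrier_mat n n \<Longrightarrow> hermitian_n n (U * diag_real n d * mat_adjoint U)"
proof -
  assume U: "U \<in> carrier_mat n n"
  have "mat_adjoint (U * diag_real n d * mat_adjoint U) = mat_adjoint (mat_adjoint U) * mat_adjoint (U * diag_real n d)"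
    by (rule adj_mult[of _ n n]) (use U in auto)
  also have "\<dots> = U * (diag_real n d * mat_adjoint U)"
    using U by (simp add: adj_mult[of _ n n _ n])
  finally show ?thesis unfolding hermitian_n_def using U by (auto simp: assoc_mult_mat[of _ n n _ n _ n])
qed



lemma unitary_right: "unitary_n n U \<Longrightarrow> U * mat_adjoint U = 1\<^sub>m n"
  unfolding unitary_n_def using mat_mult_left_right_inverse[of "mat_adjoint U" n U] by auto

lemma unitary_carrier: "unitary_n n U \<Longrightarrow> U \<in> carrier_mat n n"
  unfolding unitary_n_def by auto

lemma unitary_left: "unitary_n n U \<Longrightarrow> mat_adjoint U * U = 1\<^sub>m n"
  unfolding unitary_n_def by auto

lemma unit_cancel1: "unitary_n n V \<Longrightarrow> X \<in> carrier_mat n k \<Longrightarrow> mat_adjoint V * (V * X) = X"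
  using unitary_left[of n V] unitary_carrier[of n V]
  by (simp add: assoc_mult_mat[symmetric, of _ n n _ n _ k])

lemma unit_cancel2: "unitary_n n V \<Longrightarrow> X \<in> carrier_mat n k \<Longrightarrow> V * (mat_adjoint V * X) = X"
  using unitary_right[of n V] unitary_carrier[of n V]
  by (simp add: assoc_mult_mat[symmetric, of _ n n _ n _ k])

lemma fc_unique:
  assumes U: "unitary_n n U" and V: "unitary_n n V"
    and eq: "U * diag_real n d * mat_adjoint U = V * diag_real n e * mat_adjoint V"
  shows "U * diag_real n (f \<circ> d) * mat_adjoint U = V * diag_real n (f \<circ> e) * mat_adjoint V"
proof -
  have Uc: "U \<in> carrier_mat n n" and Vc: "V \<in> carrier_mat n n" using U V unitary_carrier by auto
  have Uac: "mat_adjoint U \<in> carrier_mat n n" and Vac: "mat_adjoint V \<in> carrier_mat n n" using Uc Vc by auto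
  define W where "W = mat_adjoint V * U"
  have Wc: "W \<in> carrier_mat n n" unfolding W_def using Uc Vc by auto
  define D where "D = diag_real n d"
  define E where "E = diag_real n e"
  define F where "F = diag_real n (f \<circ> d)"
  define G where "G = diag_real n (f \<circ> e)"
  have Dc: "D \<in> carrier_mat n n" "E \<in> carrier_mat n n" "F \<in> carrier_mat n n" "G \<in> carrier_mat n n"
    unfolding D_def E_def F_def G_def by auto
  note UU = unitary_left[OF U] unitary_right[OF U]
  note VV = unitary_left[OF V] unitary_right[OF V]
  have "W * D = mat_adjoint V * (U * D * mat_adjoint U) * U"
    unfolding W_def using Uc Vc Dc UU
    by (simp add: assoc_mult_mat[of _ n n _ n _ n])
  also have "\<dots> = mat_adjoint V * (V * E * mat_adjoint V) * U"
    using eq unfolding D_def E_def by simp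
  also have "\<dots> = E * W"
    unfolding W_def using Uc Vc Dc VV
    by (simp add: assoc_mult_mat[of _ n n _ n _ n] unit_cancel1[OF V, of _ n])
  finally have WD: "W * D = E * W" .
  have WF: "W * F = G * W"
  proof (rule eq_matI)
    fix i j assume ij: "i < dim_row (G * W)" "j < dim_col (G * W)"
    then have i: "i < n" and j: "j < n" using Wc Dc by auto
    have "(W * D) $$ (i,j) = (E * W) $$ (i,j)" using WD by simp
    then have "W $$ (i,j) * complex_of_real (d j) = complex_of_real (e i) * W $$ (i,j)"
      unfolding D_def E_def using mult_diag_right[OF Wc i j] mult_diag_left[OF Wc i j] by simp
    then have "W $$ (i,j) = 0 \<or> d j = e i"
      by (metis mult.commute mult_cancel_left of_real_eq_iff)
    then show "(W * F) $$ (i,j) = (G * W) $$ (i,j)"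
      unfolding F_def G_def using mult_diag_right[OF Wc i j] mult_diag_left[OF Wc i j]
      by (auto simp: mult.commute)
  qed (use Wc Dc in auto)
  have WF2: "W * F = mat_adjoint V * (U * F)" unfolding W_def
    using Uc Vc Dc by (rule_tac assoc_mult_mat) auto
  have GW2: "V * (G * W) = V * G * mat_adjoint V * U" unfolding W_def
    using Uc Vc Dc by (simp add: assoc_mult_mat[of _ n n _ n _ n])
  have "U * F * mat_adjoint U = V * (W * F) * mat_adjoint U"
    unfolding WF2 using unit_cancel2[OF V, of "U * F" n] Uc Dc by simp
  also have "\<dots> = V * (G * W) * mat_adjoint U" using WF by simp
  also have "\<dots> = V * G * mat_adjoint V * (U * mat_adjoint U)"
    unfolding GW2 using Uc Vc Dc
    by (rule_tac assoc_mult_mat) auto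
  also have "\<dots> = V * G * mat_adjoint V"
    using UU Vc Dc by simp
  finally show ?thesis unfolding F_def G_def .
qed

lemma matfun_eq:
  assumes U: "unitary_n n U" and A: "A = U * diag_real n d * mat_adjoint U"
  shows "matfun n f A = U * diag_real n (f \<circ> d) * mat_adjoint U"
  unfolding matfun_def
proof (rule the_equality)
  show "\<exists>U' d'. unitary_n n U' \<and> A = U' * diag_real n d' * mat_adjoint U' \<and>
      U * diag_real n (f \<circ> d) * mat_adjoint U = U' * diag_real n (f \<circ> d') * mat_adjoint U'"
    using U A by blast
next
  fix B assume "\<exists>U' d'. unitary_n n U' \<and> A = U' * diag_real n d' * mat_adjoint U' \<and>
      B = U' * diag_real n (f \<circ> d') * mat_adjoint U'"
  then obtain U' d' where "unitary_n n U'" "A = U' * diag_real n d' * mat_adjoint U'"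
      "B = U' * diag_real n (f \<circ> d') * mat_adjoint U'" by blast
  then show "B = U * diag_real n (f \<circ> d) * mat_adjoint U"
    using fc_unique[OF U, of U' d d' f] A by simp
qed



abbreviation bd :: "nat \<Rightarrow> nat \<Rightarrow> complex mat \<Rightarrow> complex mat \<Rightarrow> complex mat" where
  "bd n m X Y \<equiv> four_block_mat X (0\<^sub>m n m) (0\<^sub>m m n) Y"

lemma bd_mult: assumes "X \<in> carrier_mat n n" "Y \<in> carrier_mat m m" "X' \<in> carrier_mat n n" "Y' \<in> carrier_mat m m"
  shows "bd n m X Y * bd n m X' Y' = bd n m (X * X') (Y * Y')"
proof -
  have c: "X * X' \<in> carrier_mat n n" "Y * Y' \<in> carrier_mat m m" using assms by auto
  show ?thesis using assms c
    by (subst mult_four_block_mat[where ?n1.0=n and ?n2.0=m]) (auto simp: assms right_mult_zero_mat[of _ n n] right_mult_zero_mat[of _ m m] left_mult_zero_mat[of _ n n] left_mult_zero_mat[of _ m m] intro!: cong_four_block_mat)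
qed

lemma bd_adj: assumes "X \<in> carrier_mat n n" "Y \<in> carrier_mat m m"
  shows "mat_adjoint (bd n m X Y) = bd n m (mat_adjoint X) (mat_adjoint Y)"
  by (rule eq_matI) (use assms in auto)

lemma bd_diag: "diag_real (n+m) d = bd n m (diag_real n d) (diag_real m (\<lambda>i. d (n+i)))"
  by (rule eq_matI) auto

lemma bd_unitary: assumes "unitary_n n U" "unitary_n m V" shows "unitary_n (n+m) (bd n m U V)"
proof -
  have c: "U \<in> carrier_mat n n" "V \<in> carrier_mat m m" using assms unitary_carrier by auto
  show ?thesis unfolding unitary_n_def
    using c by (simp add: bd_adj bd_mult unitary_left[OF assms(1)] unitary_left[OF assms(2)])
qed

lemma bd_conj: assumes U: "unitary_n n U" and V: "unitary_n m V"
  shows "bd n m (U * diag_real n d * mat_adjoint U) (V * diag_real m e * mat_adjoint V) =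
    bd n m U V * diag_real (n+m) (\<lambda>i. if i < n then d i else e (i - n)) * mat_adjoint (bd n m U V)"
proof -
  have c: "U \<in> carrier_mat n n" "V \<in> carrier_mat m m" using assms unitary_carrier by auto
  have "diag_real (n+m) (\<lambda>i. if i < n then d i else e (i - n)) = bd n m (diag_real n d) (diag_real m e)"
    by (subst bd_diag) (rule cong_four_block_mat, auto intro!: eq_matI)
  then show ?thesis using c by (simp add: bd_adj bd_mult)
qed

lemma bd_matfun: assumes U: "unitary_n n U" and V: "unitary_n m V"
  and X: "X = U * diag_real n d * mat_adjoint U" and Y: "Y = V * diag_real m e * mat_adjoint V"
  shows "matfun (n+m) f (bd n m X Y) = bd n m (matfun n f X) (matfun m f Y)"
proof -
  have "matfun (n+m) f (bd n m X Y) = bd n m U V * diag_real (n+m) (f \<circ> (\<lambda>i. if i < n then d i else e (i - n))) * mat_adjoint (bd n m U V)"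
    by (rule matfun_eq[OF bd_unitary[OF U V]]) (simp add: X Y bd_conj[OF U V])
  also have "(f \<circ> (\<lambda>i. if i < n then d i else e (i - n))) = (\<lambda>i. if i < n then (f \<circ> d) i else (f \<circ> e) (i - n))"
    by auto
  also have "bd n m U V * diag_real (n+m) \<dots> * mat_adjoint (bd n m U V) = bd n m (U * diag_real n (f \<circ> d) * mat_adjoint U) (V * diag_real m (f \<circ> e) * mat_adjoint V)"
    by (rule bd_conj[OF U V, symmetric])
  finally show ?thesis using matfun_eq[OF U X] matfun_eq[OF V Y] by simp
qed



definition nrmz :: "complex vec \<Rightarrow> complex vec" where
  "nrmz w = complex_of_real (1 / sqrt (Re (w \<bullet>c w))) \<cdot>\<^sub>v w"

lemma cprod_real: "w \<in> carrier_vec n \<Longrightarrow> w \<bullet>c w = complex_of_real (Re (w \<bullet>c w)) \<and> 0 \<le> Re (w \<bullet>c w)"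
  using conjugate_square_ge_0_vec[of w] by (auto simp: less_eq_complex_def complex_eq_iff)

lemma smult_cprod: assumes "w \<in> carrier_vec n" "w' \<in> carrier_vec n"
  shows "(complex_of_real a \<cdot>\<^sub>v w) \<bullet>c (complex_of_real b \<cdot>\<^sub>v w') = complex_of_real (a * b) * (w \<bullet>c w')"
  using assms by (simp add: conjugate_smult_vec[of "complex_of_real b"])

lemma nrmz_carrier[simp]: "w \<in> carrier_vec n \<Longrightarrow> nrmz w \<in> carrier_vec n"
  unfolding nrmz_def by auto

lemma nrmz_unit: assumes w: "w \<in> carrier_vec n" and nz: "w \<bullet>c w \<noteq> 0"
  shows "nrmz w \<bullet>c nrmz w = 1"
proof -
  let ?r = "Re (w \<bullet>c w)"
  have r: "w \<bullet>c w = complex_of_real ?r" "?r \<ge> 0" using cprod_real[OF w] by auto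
  with nz have rp: "?r > 0" by (metis less_eq_real_def of_real_0)
  have e1: "1 / sqrt ?r * (1 / sqrt ?r) * ?r = 1" using rp
    by (simp add: field_simps)
  have "nrmz w \<bullet>c nrmz w = complex_of_real (1 / sqrt ?r * (1 / sqrt ?r)) * (w \<bullet>c w)"
    unfolding nrmz_def by (rule smult_cprod[OF w w])
  also have "\<dots> = complex_of_real (1 / sqrt ?r * (1 / sqrt ?r) * ?r)" by (subst r(1)) simp
  finally show ?thesis unfolding e1 by simp
qed

lemma nrmz_orth: assumes w: "w \<in> carrier_vec n" and w': "w' \<in> carrier_vec n" and o: "w \<bullet>c w' = 0"
  shows "nrmz w \<bullet>c nrmz w' = 0"
  unfolding nrmz_def smult_cprod[OF w w'] o by simp

lemma nrmz_id: assumes "w \<in> carrier_vec n" "w \<bullet>c w = 1" shows "nrmz w = w"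
  unfolding nrmz_def using assms by simp

lemma orthonormal_completion:
  assumes v: "v \<in> carrier_vec n" and v1: "v \<bullet>c v = 1"
  shows "\<exists>W. unitary_n n W \<and> col W 0 = v"
proof -
  have v0: "v \<noteq> 0\<^sub>v n" using v1 v by auto
  have npos: "n > 0" using v0 v by (cases n) auto
  interpret cof_vec_space n "TYPE(complex)" .
  define b where "b = basis_completion v"
  from basis_completion[OF v v0, folded b_def]
  have b: "set b \<subseteq> carrier_vec n" "distinct b" "\<not> lin_dep (set b)" "length b = n" "hd b = v" by auto
  then obtain vs where bv: "b = v # vs" using npos by (cases b) auto
  define ws where "ws = gram_schmidt n b"
  from gram_schmidt_result[OF b(1) b(2) b(3) ws_def]
  have ws: "corthogonal ws" "set ws \<subseteq> carrier_vec n" "length ws = n" using b by auto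
  have hws: "hd ws = v" unfolding ws_def bv using v by simp
  define us where "us = map nrmz ws"
  have us: "set us \<subseteq> carrier_vec n" "length us = n" using ws unfolding us_def by auto
  have wsc: "\<And>i. i < n \<Longrightarrow> ws ! i \<in> carrier_vec n" using ws by auto
  have usij: "us ! i \<bullet>c us ! j = (if i = j then 1 else 0)" if "i < n" "j < n" for i j
  proof -
    have "ws ! i \<bullet>c ws ! j = 0 \<longleftrightarrow> i \<noteq> j" using ws that by (auto simp: corthogonal_def)
    then show ?thesis unfolding us_def using that ws(3) nrmz_unit[OF wsc] nrmz_orth[OF wsc wsc] by auto
  qed
  define W where "W = mat_of_cols n us"
  have Wc: "W \<in> carrier_mat n n" unfolding W_def using us by auto
  have "mat_adjoint W * W = 1\<^sub>m n"
  proof (rule eq_matI)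
    fix i j assume ij: "i < dim_row (1\<^sub>m n)" "j < dim_col (1\<^sub>m n)"
    have uic: "us ! i \<in> carrier_vec n" "us ! j \<in> carrier_vec n" using ij us nth_mem[of i us] nth_mem[of j us] by auto
    have "(mat_adjoint W * W) $$ (i,j) = (\<Sum>l<n. cnj (us ! i $ l) * us ! j $ l)"
      using ij Wc us unfolding W_def by (auto simp: scalar_prod_def mat_of_cols_index atLeast0LessThan intro!: sum.cong)
    also have "\<dots> = us ! j \<bullet>c us ! i"
      using ij uic by (auto simp: scalar_prod_def atLeast0LessThan mult.commute intro!: sum.cong)
    also have "\<dots> = 1\<^sub>m n $$ (i,j)" using usij ij by auto
    finally show "(mat_adjoint W * W) $$ (i,j) = 1\<^sub>m n $$ (i,j)" .
  qed (use Wc in auto)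
  then have "unitary_n n W" using Wc unfolding unitary_n_def by auto
  moreover have "col W 0 = v" unfolding W_def us_def using us ws hws v v1 bv npos
    by (cases ws) (auto simp: nrmz_id)
  ultimately show ?thesis by blast
qed



lemma unitary_mult: assumes "unitary_n n U" "unitary_n n V" shows "unitary_n n (U * V)"
proof -
  have c: "U \<in> carrier_mat n n" "V \<in> carrier_mat n n" using assms unitary_carrier by auto
  have "mat_adjoint (U * V) * (U * V) = mat_adjoint V * (mat_adjoint U * (U * V))"
    using c by (simp add: adj_mult[of _ n n _ n] assoc_mult_mat[of _ n n _ n _ n])
  also have "\<dots> = 1\<^sub>m n" using unit_cancel1[OF assms(1) c(2)] unitary_left[OF assms(2)] by simp
  finally show ?thesis unfolding unitary_n_def using c by auto
qed

lemma hermitian_conj: assumes "hermitian_n n A" "W \<in> carrier_mat n n"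
  shows "hermitian_n n (mat_adjoint W * A * W)"
proof -
  have A: "A \<in> carrier_mat n n" "mat_adjoint A = A" using assms(1) unfolding hermitian_n_def by auto
  have "mat_adjoint (mat_adjoint W * A * W) = mat_adjoint W * mat_adjoint (mat_adjoint W * A)"
    using A assms(2) adj_mult[of "mat_adjoint W * A" n n W n] mult_carrier_mat[of "mat_adjoint W" n n A n] by simp
  also have "\<dots> = mat_adjoint W * (A * W)"
    using A assms(2) by (simp add: adj_mult[of _ n n _ n])
  finally show ?thesis unfolding hermitian_n_def using A assms(2)
    by (simp add: assoc_mult_mat[of _ n n _ n _ n])
qed

lemma eigen_exists: fixes A :: "complex mat" assumes A: "A \<in> carrier_mat (Suc m) (Suc m)"
  shows "\<exists>e v. v \<in> carrier_vec (Suc m) \<and> v \<noteq> 0\<^sub>v (Suc m) \<and> A *\<^sub>v v = e \<cdot>\<^sub>v v"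
proof -
  obtain as where cp: "char_poly A = (\<Prod> a \<leftarrow> as. [:- a, 1:])" "length as = Suc m"
    using char_poly_factorized[OF A] by blast
  then obtain e rs where as: "as = e # rs" by (cases as) auto
  have "poly (char_poly A) e = 0" unfolding cp as by simp
  then have "eigenvalue A e" using eigenvalue_root_char_poly[OF A] by simp
  then show ?thesis unfolding eigenvalue_def eigenvector_def using A by auto
qed

lemma spectral: "hermitian_n n A \<Longrightarrow> \<exists>U d. unitary_n n U \<and> A = U * diag_real n d * mat_adjoint U"
proof (induction n arbitrary: A)
  case 0
  then have A: "A \<in> carrier_mat 0 0" unfolding hermitian_n_def by auto
  have "unitary_n 0 (1\<^sub>m 0)" unfolding unitary_n_def by auto
  moreover have "A = 1\<^sub>m 0 * diag_real 0 (\<lambda>_. 0) * mat_adjoint (1\<^sub>m 0)"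
    using A by (auto intro!: eq_matI)
  ultimately show ?case by blast
next
  case (Suc m)
  let ?n = "Suc m"
  have A: "A \<in> carrier_mat ?n ?n" "mat_adjoint A = A" using Suc.prems unfolding hermitian_n_def by auto
  obtain e v where ev: "v \<in> carrier_vec ?n" "v \<noteq> 0\<^sub>v ?n" "A *\<^sub>v v = e \<cdot>\<^sub>v v"
    using eigen_exists[OF A(1)] by blast
  have vv: "v \<bullet>c v \<noteq> 0" using ev(1,2) conjugate_square_eq_0_vec[OF ev(1)] by auto
  define v1 where "v1 = nrmz v"
  have v1: "v1 \<in> carrier_vec ?n" "v1 \<bullet>c v1 = 1" unfolding v1_def using nrmz_unit[OF ev(1) vv] ev(1) by auto
  have Av1: "A *\<^sub>v v1 = e \<cdot>\<^sub>v v1" unfolding v1_def nrmz_def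
    using mult_mat_vec[OF A(1) ev(1)] ev(3) by (simp add: smult_smult_assoc mult.commute)
  obtain W where W: "unitary_n ?n W" "col W 0 = v1" using orthonormal_completion[OF v1] by blast
  have Wc: "W \<in> carrier_mat ?n ?n" using W unitary_carrier by auto
  define A' where "A' = mat_adjoint W * A * W"
  have hA': "hermitian_n ?n A'" unfolding A'_def by (rule hermitian_conj[OF Suc.prems Wc])
  have A'c: "A' \<in> carrier_mat ?n ?n" and A'a: "mat_adjoint A' = A'" using hA' unfolding hermitian_n_def by auto
  have "col A' 0 = (mat_adjoint W * A) *\<^sub>v col W 0" unfolding A'_def
    using Wc A by (subst col_mult2[of _ ?n ?n]) auto
  also have "\<dots> = mat_adjoint W *\<^sub>v (e \<cdot>\<^sub>v v1)" using W Wc A Av1 v1 assoc_mult_mat_vec[of "mat_adjoint W" ?n ?n A ?n v1] by simp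
  also have "\<dots> = e \<cdot>\<^sub>v (mat_adjoint W *\<^sub>v col W 0)" using mult_mat_vec[of "mat_adjoint W" ?n ?n v1 e] Wc v1 W by simp
  also have "mat_adjoint W *\<^sub>v col W 0 = col (mat_adjoint W * W) 0"
    using Wc by (subst col_mult2[of _ ?n ?n]) auto
  also have "\<dots> = unit_vec ?n 0" using unitary_left[OF W(1)] by simp
  finally have colA': "col A' 0 = e \<cdot>\<^sub>v unit_vec ?n 0" .
  have A'i0: "A' $$ (i, 0) = (if i = 0 then e else 0)" if "i < ?n" for i
    using arg_cong[OF colA', of "\<lambda>x. x $ i"] that A'c by auto
  have A'0j: "A' $$ (0, j) = (if j = 0 then e else 0)" if "j < ?n" for j
  proof -
    have "A' $$ (0, j) = mat_adjoint A' $$ (0, j)" using A'a by simp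
    also have "\<dots> = cnj (A' $$ (j, 0))" using A'c that by simp
    finally show ?thesis using A'i0[OF that] A'i0[of 0] by (auto simp: complex_eq_iff)
  qed
  have ereal: "e = complex_of_real (Re e)"
  proof -
    have "A' $$ (0, 0) = mat_adjoint A' $$ (0, 0)" using A'a by simp
    also have "\<dots> = cnj (A' $$ (0, 0))" using A'c by simp
    finally show ?thesis using A'i0[of 0] by (auto simp: complex_eq_iff)
  qed
  define A3 where "A3 = mat m m (\<lambda>(i,j). A' $$ (Suc i, Suc j))"
  have hA3: "hermitian_n m A3" unfolding hermitian_n_def
  proof
    show "A3 \<in> carrier_mat m m" unfolding A3_def by auto
    show "mat_adjoint A3 = A3"
    proof (rule eq_matI)
      fix i j assume ij: "i < dim_row A3" "j < dim_col A3"
      then have "A' $$ (Suc i, Suc j) = mat_adjoint A' $$ (Suc i, Suc j)" using A'a by simp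
      then show "mat_adjoint A3 $$ (i, j) = A3 $$ (i, j)" using ij A'c unfolding A3_def by auto
    qed (auto simp: A3_def)
  qed
  obtain U3 d3 where U3: "unitary_n m U3" "A3 = U3 * diag_real m d3 * mat_adjoint U3"
    using Suc.IH[OF hA3] by blast
  have U1: "unitary_n 1 (1\<^sub>m 1)" unfolding unitary_n_def by auto
  define B where "B = bd 1 m (1\<^sub>m 1) U3"
  have Bu: "unitary_n ?n B" unfolding B_def using bd_unitary[OF U1 U3(1)] by simp
  have Bc: "B \<in> carrier_mat ?n ?n" using Bu unitary_carrier by auto
  define d where "d = (\<lambda>i. if i < 1 then Re e else d3 (i - 1))"
  have "bd 1 m (1\<^sub>m 1 * diag_real 1 (\<lambda>_. Re e) * mat_adjoint (1\<^sub>m 1)) A3 =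
     B * diag_real (1 + m) d * mat_adjoint B"
    unfolding U3(2) B_def d_def by (rule bd_conj[OF U1 U3(1)])
  moreover have "bd 1 m (1\<^sub>m 1 * diag_real 1 (\<lambda>_. Re e) * mat_adjoint (1\<^sub>m 1)) A3 = A'"
  proof (rule eq_matI)
    fix i j assume ij: "i < dim_row A'" "j < dim_col A'"
    then have ij': "i < ?n" "j < ?n" using A'c by auto
    show "bd 1 m (1\<^sub>m 1 * diag_real 1 (\<lambda>_. Re e) * mat_adjoint (1\<^sub>m 1)) A3 $$ (i, j) = A' $$ (i, j)"
      using ij' A'i0 A'0j ereal unfolding A3_def
      by (cases i; cases j) auto
  qed (use A'c A3_def in auto)
  ultimately have A'eq: "A' = B * diag_real ?n d * mat_adjoint B" by simp
  have "A' = mat_adjoint W * (A * W)" unfolding A'_def using Wc A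
    by (rule_tac assoc_mult_mat) auto
  then have WA': "W * A' = A * W" using unit_cancel2[OF W(1), of "A * W" ?n] Wc A by simp
  have "A = W * A' * mat_adjoint W" unfolding WA'
    using Wc A unitary_right[OF W(1)] by (simp add: assoc_mult_mat[of _ ?n ?n _ ?n _ ?n])
  also have "\<dots> = (W * B) * diag_real ?n d * mat_adjoint (W * B)"
    unfolding A'eq using Wc Bc
    by (simp add: adj_mult[of _ ?n ?n _ ?n] assoc_mult_mat[of _ ?n ?n _ ?n _ ?n])
  finally show ?case using unitary_mult[OF W(1) Bu] by blast
qed



lemma conj_append: "conjugate (a @\<^sub>v b) = conjugate a @\<^sub>v conjugate (b :: complex vec)"
  by (rule eq_vecI) auto

lemma zero_append: "0\<^sub>v (n+m) = 0\<^sub>v n @\<^sub>v (0\<^sub>v m :: complex vec)"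
  by (rule eq_vecI) auto

lemma qf_nonneg: "b \<in> carrier_vec m \<Longrightarrow> 0 \<le> Re (conjugate b \<bullet> (b :: complex vec))"
  using conjugate_square_ge_0_vec[of b] conjugate_vec_sprod_comm[of b m b]
  by (auto simp: less_eq_complex_def)

lemma qf_pos: "b \<in> carrier_vec m \<Longrightarrow> b \<noteq> 0\<^sub>v m \<Longrightarrow> 0 < Re (conjugate b \<bullet> (b :: complex vec))"
  using conjugate_square_greater_0_vec[of b m] conjugate_vec_sprod_comm[of b m b]
  by (auto simp: less_complex_def)

lemma pd_herm: "pd_n n A \<Longrightarrow> hermitian_n n A" unfolding pd_n_def by auto
lemma psd_herm: "psd_n n A \<Longrightarrow> hermitian_n n A" unfolding psd_n_def by auto

lemma pd_bd: assumes A: "pd_n n A" shows "pd_n (n+m) (bd n m A (1\<^sub>m m))"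
proof -
  have Ac: "A \<in> carrier_mat n n" "mat_adjoint A = A" using A unfolding pd_n_def hermitian_n_def by auto
  have herm: "hermitian_n (n+m) (bd n m A (1\<^sub>m m))" unfolding hermitian_n_def
    using Ac by (simp add: bd_adj)
  have "0 < Re (conjugate (a @\<^sub>v b) \<bullet> (bd n m A (1\<^sub>m m) *\<^sub>v (a @\<^sub>v b)))"
    if a: "a \<in> carrier_vec n" and b: "b \<in> carrier_vec m" and nz: "a @\<^sub>v b \<noteq> 0\<^sub>v (n+m)" for a b
  proof -
    have "bd n m A (1\<^sub>m m) *\<^sub>v (a @\<^sub>v b) = (A *\<^sub>v a) @\<^sub>v b"
      using Ac a b by (subst four_block_mat_mult_vec[of _ n n _ m _ m]) auto
    then have eq: "conjugate (a @\<^sub>v b) \<bullet> (bd n m A (1\<^sub>m m) *\<^sub>v (a @\<^sub>v b)) = conjugate a \<bullet> (A *\<^sub>v a) + conjugate b \<bullet> b"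
      using Ac a b by (simp add: conj_append scalar_prod_append[of _ n _ m])
    show ?thesis
    proof (cases "a = 0\<^sub>v n")
      case True
      then have "b \<noteq> 0\<^sub>v m" using nz zero_append by metis
      then show ?thesis unfolding eq using True qf_pos[OF b] a b Ac by simp
    next
      case False
      then show ?thesis unfolding eq using A a qf_nonneg[OF b] unfolding pd_n_def
        by (simp add: add_pos_nonneg)
    qed
  qed
  then show ?thesis unfolding pd_n_def using herm
    by (simp add: all_vec_append[where P = "\<lambda>v. v \<noteq> 0\<^sub>v (n+m) \<longrightarrow> _ v"])
qed

lemma row_adj: "i < dim_col (U :: complex mat) \<Longrightarrow> row (mat_adjoint U) i = conjugate (col U i)"
  by (rule eq_vecI) auto

lemma psd_sqrt: assumes L: "psd_n n L" shows "\<exists>K \<in> carrier_mat n n. mat_adjoint K * K = L"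
proof -
  obtain U d where U: "unitary_n n U" "L = U * diag_real n d * mat_adjoint U"
    using spectral[OF psd_herm[OF L]] by blast
  have Uc: "U \<in> carrier_mat n n" using U unitary_carrier by auto
  have Lc: "L \<in> carrier_mat n n" using L unfolding psd_n_def hermitian_n_def by auto
  have D: "mat_adjoint U * (L * U) = diag_real n d"
  proof -
    have "L * U = U * diag_real n d" unfolding U(2) using Uc unitary_left[OF U(1)]
      by (simp add: assoc_mult_mat[of _ n n _ n _ n])
    then show ?thesis using unit_cancel1[OF U(1), of "diag_real n d" n] by simp
  qed
  have dpos: "d i \<ge> 0" if i: "i < n" for i
  proof -
    have "complex_of_real (d i) = (mat_adjoint U * (L * U)) $$ (i,i)" using D i by simp
    also have "\<dots> = row (mat_adjoint U) i \<bullet> col (L * U) i" using i Uc Lc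
      by (subst index_mult_mat) auto
    also have "col (L * U) i = L *\<^sub>v col U i" using i Uc Lc by (rule_tac col_mult2) auto
    also have "row (mat_adjoint U) i = conjugate (col U i)" using i Uc by (simp add: row_adj)
    finally have "d i = Re (conjugate (col U i) \<bullet> (L *\<^sub>v col U i))" by (metis Re_complex_of_real)
    moreover have "col U i \<in> carrier_vec n" using Uc by auto
    ultimately show ?thesis using L unfolding psd_n_def by auto
  qed
  define K where "K = diag_real n (\<lambda>i. sqrt (d i)) * mat_adjoint U"
  have Kc: "K \<in> carrier_mat n n" unfolding K_def using Uc by auto
  have "mat_adjoint K * K = U * (diag_real n (\<lambda>i. sqrt (d i)) * diag_real n (\<lambda>i. sqrt (d i))) * mat_adjoint U"
    unfolding K_def using Uc by (simp add: adj_mult[of _ n n _ n] assoc_mult_mat[of _ n n _ n _ n])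
  also have "diag_real n (\<lambda>i. sqrt (d i)) * diag_real n (\<lambda>i. sqrt (d i)) = diag_real n d"
    unfolding diag_mult_diag by (rule eq_matI) (auto simp: dpos)
  finally show ?thesis using Kc U(2) by auto
qed



lemma matfun_diag_const: "matfun n f (diag_real n (\<lambda>_. c)) = diag_real n (\<lambda>_. f c)"
proof -
  have U: "unitary_n n (1\<^sub>m n)" unfolding unitary_n_def by auto
  have "diag_real n (\<lambda>_. c) = 1\<^sub>m n * diag_real n (\<lambda>_. c) * mat_adjoint (1\<^sub>m n)" by simp
  from matfun_eq[OF U this] show ?thesis by (simp add: comp_def)
qed

lemma one_diag: "1\<^sub>m n = diag_real n (\<lambda>_. 1)" by (rule eq_matI) auto
lemma zero_diag: "0\<^sub>m n n = diag_real n (\<lambda>_. 0)" by (rule eq_matI) auto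

lemma unitary_one: "unitary_n n (1\<^sub>m n)" unfolding unitary_n_def by auto

lemma mpow_bd: assumes C: "hermitian_n n C" and Y: "Y = diag_real m (\<lambda>_. c)"
  shows "mpow (n+m) (bd n m C Y) a = bd n m (mpow n C a) (diag_real m (\<lambda>_. c powr a))"
proof -
  obtain U d where U: "unitary_n n U" "C = U * diag_real n d * mat_adjoint U" using spectral[OF C] by blast
  have "Y = 1\<^sub>m m * diag_real m (\<lambda>_. c) * mat_adjoint (1\<^sub>m m)" using Y by simp
  from bd_matfun[OF U(1) unitary_one U(2) this] show ?thesis
    unfolding mpow_def using Y matfun_diag_const by simp
qed

lemma mpow_herm: assumes C: "hermitian_n n C" shows "hermitian_n n (mpow n C a)"
proof -
  obtain U d where U: "unitary_n n U" "C = U * diag_real n d * mat_adjoint U" using spectral[OF C] by blast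
  show ?thesis unfolding mpow_def matfun_eq[OF U] using U(1) unitary_carrier hermitian_diag_conj by blast
qed

lemma mtrace_bd: assumes "X \<in> carrier_mat n n" shows "mtrace (bd n m X (0\<^sub>m m m)) = mtrace X"
proof -
  have "mtrace (bd n m X (0\<^sub>m m m)) = (\<Sum>i<n+m. bd n m X (0\<^sub>m m m) $$ (i,i))"
    unfolding mtrace_def using assms by simp
  also have "\<dots> = (\<Sum>i<n. bd n m X (0\<^sub>m m m) $$ (i,i)) + (\<Sum>i\<in>{n..<n+m}. bd n m X (0\<^sub>m m m) $$ (i,i))"
    by (simp add: sum.atLeastLessThan_concat[symmetric] lessThan_atLeast0)
  also have "(\<Sum>i\<in>{n..<n+m}. bd n m X (0\<^sub>m m m) $$ (i,i)) = 0"
    using assms by (intro sum.neutral) auto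
  also have "(\<Sum>i<n. bd n m X (0\<^sub>m m m) $$ (i,i)) = mtrace X"
    unfolding mtrace_def using assms by (intro sum.cong) auto
  finally show ?thesis by simp
qed

lemma reduction:
  assumes H: "H \<in> carrier_mat n n" and K: "K \<in> carrier_mat n n" and L: "L = mat_adjoint K * K"
    and C: "hermitian_n n C"
  shows "psi (n+n) p s (0\<^sub>m (n+n) (n+n)) (four_block_mat H (0\<^sub>m n n) K (0\<^sub>m n n)) (bd n n C (1\<^sub>m n))
       = psi n p s L H C"
proof -
  let ?H2 = "four_block_mat H (0\<^sub>m n n) K (0\<^sub>m n n)"
  define P where "P = mpow n C p"
  have hP: "hermitian_n n P" unfolding P_def by (rule mpow_herm[OF C])
  have Pc: "P \<in> carrier_mat n n" "mat_adjoint P = P" using hP unfolding hermitian_n_def by auto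
  have E: "mpow (n+n) (bd n n C (1\<^sub>m n)) p = bd n n P (1\<^sub>m n)"
    using mpow_bd[OF C one_diag] unfolding P_def by (simp add: one_diag[symmetric])
  have adjH2: "mat_adjoint ?H2 = four_block_mat (mat_adjoint H) (mat_adjoint K) (0\<^sub>m n n) (0\<^sub>m n n)"
    by (rule eq_matI) (use H K in auto)
  have Lc: "L \<in> carrier_mat n n" using L K by auto
  define M where "M = L + mat_adjoint H * P * H"
  have Mc: "M \<in> carrier_mat n n" unfolding M_def using Lc H Pc by auto
  have s1: "mat_adjoint ?H2 * bd n n P (1\<^sub>m n) = four_block_mat (mat_adjoint H * P) (mat_adjoint K) (0\<^sub>m n n) (0\<^sub>m n n)"
    unfolding adjH2 using H K Pc
    by (subst mult_four_block_mat[where ?n1.0=n and ?n2.0=n]) (auto intro!: cong_four_block_mat)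
  have s2: "four_block_mat (mat_adjoint H * P) (mat_adjoint K) (0\<^sub>m n n) (0\<^sub>m n n) * ?H2 = bd n n M (0\<^sub>m n n)"
    unfolding M_def L using H K Pc
    by (subst mult_four_block_mat[where ?n1.0=n and ?n2.0=n]) (auto intro!: cong_four_block_mat simp: comm_add_mat[of _ n n])
  have hM: "hermitian_n n M" unfolding hermitian_n_def
  proof
    show "M \<in> carrier_mat n n" by (rule Mc)
    have "mat_adjoint (mat_adjoint H * P * H) = mat_adjoint H * P * H"
      using H Pc by (simp add: adj_mult[of _ n n _ n] assoc_mult_mat[of _ n n _ n _ n])
    moreover have "mat_adjoint L = L" unfolding L using K by (simp add: adj_mult[of _ n n _ n])
    ultimately show "mat_adjoint M = M" unfolding M_def using Lc H Pc by (simp add: adj_add[of _ n n])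
  qed
  have "0\<^sub>m (n+n) (n+n) + mat_adjoint ?H2 * mpow (n+n) (bd n n C (1\<^sub>m n)) p * ?H2 = bd n n M (0\<^sub>m n n)"
    unfolding E s1 s2 using Mc by (intro left_add_zero_mat) auto
  moreover have "mpow (n+n) (bd n n M (0\<^sub>m n n)) s = bd n n (mpow n M s) (0\<^sub>m n n)"
    using mpow_bd[OF hM zero_diag] by (simp add: zero_diag[symmetric])
  moreover have "mpow n M s \<in> carrier_mat n n" using mpow_herm[OF hM] unfolding hermitian_n_def by auto
  ultimately show ?thesis unfolding psi_def M_def[symmetric] P_def[symmetric]
    by (simp add: mtrace_bd)
qed



lemma psd_zero: "psd_n n (0\<^sub>m n n)"
proof -
  have "0\<^sub>m n n *\<^sub>v v = 0\<^sub>v n" if "v \<in> carrier_vec n" for v :: "complex vec"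
    by (rule eq_vecI) (use that in auto)
  then show ?thesis unfolding psd_n_def hermitian_n_def by auto
qed

lemma adj_smult: "mat_adjoint (c \<cdot>\<^sub>m A) = cnj c \<cdot>\<^sub>m mat_adjoint A"
  by (rule eq_matI) auto

lemma comb_bd: assumes "A \<in> carrier_mat n n" "B \<in> carrier_mat n n"
  shows "complex_of_real t \<cdot>\<^sub>m bd n n A (1\<^sub>m n) + complex_of_real (1 - t) \<cdot>\<^sub>m bd n n B (1\<^sub>m n)
    = bd n n (complex_of_real t \<cdot>\<^sub>m A + complex_of_real (1 - t) \<cdot>\<^sub>m B) (1\<^sub>m n)"
proof (rule eq_matI)
  fix i j assume "i < dim_row (bd n n (complex_of_real t \<cdot>\<^sub>m A + complex_of_real (1 - t) \<cdot>\<^sub>m B) (1\<^sub>m n))"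
    "j < dim_col (bd n n (complex_of_real t \<cdot>\<^sub>m A + complex_of_real (1 - t) \<cdot>\<^sub>m B) (1\<^sub>m n))"
  then show "(complex_of_real t \<cdot>\<^sub>m bd n n A (1\<^sub>m n) + complex_of_real (1 - t) \<cdot>\<^sub>m bd n n B (1\<^sub>m n)) $$ (i, j) =
         bd n n (complex_of_real t \<cdot>\<^sub>m A + complex_of_real (1 - t) \<cdot>\<^sub>m B) (1\<^sub>m n) $$ (i, j)"
    using assms by (auto simp flip: of_real_add)
qed (use assms in auto)

lemma comb_herm: assumes "hermitian_n n A" "hermitian_n n B"
  shows "hermitian_n n (complex_of_real t \<cdot>\<^sub>m A + complex_of_real (1 - t) \<cdot>\<^sub>m B)"
  using assms unfolding hermitian_n_def by (auto simp: adj_add[of _ n n] adj_smult)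

lemma main_dir:
  assumes conv: "\<forall>n>0. \<forall>H \<in> carrier_mat n n. convex_on_pd n (psi n p s (0\<^sub>m n n) H)"
    and n: "n > 0" and H: "H \<in> carrier_mat n n" and L: "psd_n n L"
  shows "convex_on_pd n (psi n p s L H)"
  unfolding convex_on_pd_def
proof (intro allI impI)
  fix A B and t :: real assume A: "pd_n n A" and B: "pd_n n B" and t: "0 \<le> t" "t \<le> 1"
  obtain K where K: "K \<in> carrier_mat n n" "mat_adjoint K * K = L" using psd_sqrt[OF L] by blast
  let ?H2 = "four_block_mat H (0\<^sub>m n n) K (0\<^sub>m n n)"
  have H2: "?H2 \<in> carrier_mat (n+n) (n+n)" using H K by auto
  have c: "convex_on_pd (n+n) (psi (n+n) p s (0\<^sub>m (n+n) (n+n)) ?H2)" using conv n H2 by auto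
  have Ac: "A \<in> carrier_mat n n" "B \<in> carrier_mat n n" using A B unfolding pd_n_def hermitian_n_def by auto
  have "psi (n+n) p s (0\<^sub>m (n+n) (n+n)) ?H2 (complex_of_real t \<cdot>\<^sub>m bd n n A (1\<^sub>m n) + complex_of_real (1 - t) \<cdot>\<^sub>m bd n n B (1\<^sub>m n))
      \<le> t * psi (n+n) p s (0\<^sub>m (n+n) (n+n)) ?H2 (bd n n A (1\<^sub>m n)) + (1 - t) * psi (n+n) p s (0\<^sub>m (n+n) (n+n)) ?H2 (bd n n B (1\<^sub>m n))"
    using c pd_bd[OF A] pd_bd[OF B] t unfolding convex_on_pd_def by blast
  then show "psi n p s L H (complex_of_real t \<cdot>\<^sub>m A + complex_of_real (1 - t) \<cdot>\<^sub>m B) \<le> t * psi n p s L H A + (1 - t) * psi n p s L H B"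
    unfolding comb_bd[OF Ac]
    using reduction[OF H K(1) K(2)[symmetric]] pd_herm[OF A] pd_herm[OF B] comb_herm[OF pd_herm[OF A] pd_herm[OF B]]
    by simp
qed

lemma main_dir2:
  assumes conv: "\<forall>n>0. \<forall>H \<in> carrier_mat n n. concave_on_pd n (psi n p s (0\<^sub>m n n) H)"
    and n: "n > 0" and H: "H \<in> carrier_mat n n" and L: "psd_n n L"
  shows "concave_on_pd n (psi n p s L H)"
  unfolding concave_on_pd_def
proof (intro allI impI)
  fix A B and t :: real assume A: "pd_n n A" and B: "pd_n n B" and t: "0 \<le> t" "t \<le> 1"
  obtain K where K: "K \<in> carrier_mat n n" "mat_adjoint K * K = L" using psd_sqrt[OF L] by blast
  let ?H2 = "four_block_mat H (0\<^sub>m n n) K (0\<^sub>m n n)"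
  have H2: "?H2 \<in> carrier_mat (n+n) (n+n)" using H K by auto
  have c: "concave_on_pd (n+n) (psi (n+n) p s (0\<^sub>m (n+n) (n+n)) ?H2)" using conv n H2 by auto
  have Ac: "A \<in> carrier_mat n n" "B \<in> carrier_mat n n" using A B unfolding pd_n_def hermitian_n_def by auto
  have "t * psi (n+n) p s (0\<^sub>m (n+n) (n+n)) ?H2 (bd n n A (1\<^sub>m n)) + (1 - t) * psi (n+n) p s (0\<^sub>m (n+n) (n+n)) ?H2 (bd n n B (1\<^sub>m n))
     \<le> psi (n+n) p s (0\<^sub>m (n+n) (n+n)) ?H2 (complex_of_real t \<cdot>\<^sub>m bd n n A (1\<^sub>m n) + complex_of_real (1 - t) \<cdot>\<^sub>m bd n n B (1\<^sub>m n))"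
    using c pd_bd[OF A] pd_bd[OF B] t unfolding concave_on_pd_def by blast
  then show "t * psi n p s L H A + (1 - t) * psi n p s L H B \<le> psi n p s L H (complex_of_real t \<cdot>\<^sub>m A + complex_of_real (1 - t) \<cdot>\<^sub>m B)"
    unfolding comb_bd[OF Ac]
    using reduction[OF H K(1) K(2)[symmetric]] pd_herm[OF A] pd_herm[OF B] comb_herm[OF pd_herm[OF A] pd_herm[OF B]]
    by simp
qed

theorem lemma2p2:
  fixes p s :: real
  assumes "s > 0"
  shows "((\<forall>n>0. \<forall>H \<in> carrier_mat n n. \<forall>L. psd_n n L \<longrightarrow> convex_on_pd n (psi n p s L H))
           \<longleftrightarrow> (\<forall>n>0. \<forall>H \<in> carrier_mat n n. convex_on_pd n (psi n p s (0\<^sub>m n n) H)))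
       \<and> ((\<forall>n>0. \<forall>H \<in> carrier_mat n n. \<forall>L. psd_n n L \<longrightarrow> concave_on_pd n (psi n p s L H))
           \<longleftrightarrow> (\<forall>n>0. \<forall>H \<in> carrier_mat n n. concave_on_pd n (psi n p s (0\<^sub>m n n) H)))"
  using main_dir[of p s] main_dir2[of p s] psd_zero by blast


end
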